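(* Let $(M,d)$ be a compact metric space, $\mu$ a probability measure on $M$, $k:M\times M\to[0,1]$ measurable, $M^s\subseteq M$ measurable, and $\rho>0$. For a probability measure $\nu$ on $M$ and measurable $v:M\setminus M^s\to[0,1]$ define, for $x\in M\setminus M^s$, $$(T_\nu v)(x)=\frac{\int_{M^s}k(x,y)\,d\nu(y)+\int_{M\setminus M^s}k(x,y)v(y)\,d\nu(y)}{\rho+\int_M k(x,y)\,d\nu(y)}.$$ Let $v^*:M\setminus M^s\to[0,1]$ be the unique measurable map with $T_\mu v^*=v^*$. For $S=\{x_1,\dots,x_n\}$ let $\mu_S(P)=\frac1n\sum_{i=1}^n\mathbf 1(x_i\in P)$ be the empirical measure, and for $u:M\setminus M^s\to\mathbb{R}$ let $\|u\|_S=\max_{x_i\in S\setminus M^s}|u(x_i)|$. Then for every $\epsilon>0$ and every $n>\frac{6}{\epsilon\rho}$, $$\Pr_{S\sim\mu^n}\big[\|v^*-T_{\mu_S}v^*\|_S>\epsilon\big]<4n\exp\Big(-\frac{(n-1)\rho^2\epsilon^2}{36}\Big),$$ where $S\sim\mu^n$ means $x_1,\dots,x_n$ are i.i.d. with law $\mu$. *)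

theory Defs
  imports "HOL-Probability.Probability"
begin

text \<open>The operator T_nu applied to v at the point x (meaningful for x outside Ms).
  Here Ms is the absorbing set M^s and M - M^s is rendered as space nu - Ms.\<close>
definition T_op :: "'a measure \<Rightarrow> ('a \<Rightarrow> 'a \<Rightarrow> real) \<Rightarrow> 'a set \<Rightarrow> real
                     \<Rightarrow> ('a \<Rightarrow> real) \<Rightarrow> 'a \<Rightarrow> real" where
  "T_op nu k Ms rho v x =
     ((LINT y:Ms|nu. k x y) + (LINT y:(space nu - Ms)|nu. k x y * v y))
     / (rho + (LINT y|nu. k x y))"

text \<open>Empirical measure of the sample x_0, ..., x_(n-1):
  mu_S(P) = (1/n) * card {i < n. x_i in P}.\<close>
definition emp_measure :: "nat \<Rightarrow> (nat \<Rightarrow> 'a) \<Rightarrow> 'a measure" where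
  "emp_measure n X = measure_pmf (map_pmf X (pmf_of_set {..<n}))"

definition sample_norm :: "nat \<Rightarrow> (nat \<Rightarrow> 'a) \<Rightarrow> 'a set \<Rightarrow> ('a \<Rightarrow> real) \<Rightarrow> real" where
  "sample_norm n X Ms u = Max (insert 0 {\<bar>u (X i)\<bar> | i. i < n \<and> X i \<notin> Ms})"

end

theory Submission
  imports Defs
begin


lemma indep_coords:
  fixes M :: "'a measure" and I :: "'i set"
  assumes M: "prob_space M" and fin: "finite I" and ne: "I \<noteq> {}"
  shows "prob_space.indep_vars (PiM I (\<lambda>_. M)) (\<lambda>_. M) (\<lambda>j x. x j) I"
proof -
  interpret PP: prob_space "PiM I (\<lambda>_. M)" by (rule prob_space_PiM) (use M in auto)
  show ?thesis
  proof (subst PP.indep_vars_iff_distr_eq_PiM'[OF ne])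
    show "(\<lambda>x :: 'i \<Rightarrow> 'a. x i) \<in> measurable (PiM I (\<lambda>_. M)) M" if "i \<in> I" for i using that by (intro measurable_component_singleton) auto
    have "distr (PiM I (\<lambda>_. M)) M (\<lambda>x. x j) = M" if "j \<in> I" for j
      using distr_PiM_component[of I "\<lambda>_. M" j] M that by auto
    then have "(\<Pi>\<^sub>M i\<in>I. distr (Pi\<^sub>M I (\<lambda>_. M)) M (\<lambda>x. x i)) = PiM I (\<lambda>_. M)"
      by (intro PiM_cong) auto
    moreover have "distr (Pi\<^sub>M I (\<lambda>_. M)) (Pi\<^sub>M I (\<lambda>_. M)) (\<lambda>x. restrict (\<lambda>i. x i) I) = PiM I (\<lambda>_. M)"
    proof -
      have "distr (Pi\<^sub>M I (\<lambda>_. M)) (Pi\<^sub>M I (\<lambda>_. M)) (\<lambda>x. restrict (\<lambda>i. x i) I) = distr (Pi\<^sub>M I (\<lambda>_. M)) (Pi\<^sub>M I (\<lambda>_. M)) (\<lambda>x. x)"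
        by (intro distr_cong) (auto simp: space_PiM PiE_def extensional_def restrict_def)
      then show ?thesis by simp
    qed
    ultimately show "distr (Pi\<^sub>M I (\<lambda>_. M)) (Pi\<^sub>M I (\<lambda>_. M)) (\<lambda>x. restrict (\<lambda>i. x i) I) =
       (\<Pi>\<^sub>M i\<in>I. distr (Pi\<^sub>M I (\<lambda>_. M)) M (\<lambda>x. x i))" by simp
  qed
qed

lemma hoeff_PiM:
  fixes M :: "'a measure" and I :: "'i set" and h :: "'a \<Rightarrow> real" and t :: real
  assumes M: "prob_space M" and fin: "finite I" and ne: "I \<noteq> {}"
    and h: "h \<in> borel_measurable M" and hr: "\<And>z. 0 \<le> h z \<and> h z \<le> 1" and t: "t \<ge> 0"
  shows "measure (PiM I (\<lambda>_. M)) {x \<in> space (PiM I (\<lambda>_. M)).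
            \<bar>(\<Sum>j\<in>I. h (x j)) / card I - (\<integral>z. h z \<partial>M)\<bar> \<ge> t} \<le> 2 * exp (-2 * card I * t\<^sup>2)"
proof -
  obtain j0 where j0: "j0 \<in> I" using ne by auto
  interpret PP: prob_space "PiM I (\<lambda>_. M)" by (rule prob_space_PiM) (use M in auto)
  have comp: "(\<lambda>x :: 'i \<Rightarrow> 'a. x j) \<in> measurable (PiM I (\<lambda>_. M)) M" if "j \<in> I" for j
    using that by (intro measurable_component_singleton) auto
  have ind: "PP.indep_vars (\<lambda>_. borel) (\<lambda>j x. h (x j)) I"
    by (rule PP.indep_vars_compose2[OF indep_coords[OF M fin ne]]) (use h in auto)
  have dc: "distr (PiM I (\<lambda>_. M)) M (\<lambda>x. x j) = M" if "j \<in> I" for j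
    using distr_PiM_component[of I "\<lambda>_. M" j] M that by auto
  have dist: "distr (PiM I (\<lambda>_. M)) borel (\<lambda>x. h (x j)) = distr (PiM I (\<lambda>_. M)) borel (\<lambda>x. h (x j0))"
    if "j \<in> I" for j
  proof -
    have "distr (PiM I (\<lambda>_. M)) borel (\<lambda>x. h (x j)) = distr M borel h" if "j \<in> I" for j
      using distr_distr[OF h comp[OF that]] dc[OF that] by (simp add: comp_def)
    then show ?thesis using that j0 by simp
  qed
  have E: "lebesgue_integral M h = PP.expectation (\<lambda>x. h (x j0))"
    using integral_distr[OF comp[OF j0], of h] h dc[OF j0] by simp
  interpret H: Hoeffding_ineq_iid "PiM I (\<lambda>_. M)" I "\<lambda>j x. h (x j)" "\<lambda>x. h (x j0)" 0 1 "lebesgue_integral M h"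
  proof unfold_locales
    show "lebesgue_integral M h \<equiv> PP.expectation (\<lambda>x. h (x j0))" using E by simp
  qed (use fin ind dist h comp[OF j0] hr in auto)
  show ?thesis
    using H.Hoeffding_ineq_abs_ge'[of t] t ne by simp
qed

lemma cond_bound:
  fixes mu :: "'a measure" and g :: "'a \<Rightarrow> 'a \<Rightarrow> real" and n i :: nat and t :: real
  assumes M: "prob_space mu" and g_meas[measurable]: "(\<lambda>(x, y). g x y) \<in> borel_measurable (mu \<Otimes>\<^sub>M mu)"
    and gr: "\<And>x y. 0 \<le> g x y \<and> g x y \<le> 1" and i: "i < n" and n2: "2 \<le> n" and t: "t \<ge> 0"
  defines "S \<equiv> {X \<in> space (PiM {..<n} (\<lambda>_. mu)).
      \<bar>(\<Sum>j\<in>{..<n}-{i}. g (X i) (X j)) / real (card ({..<n}-{i})) - (\<integral>y. g (X i) y \<partial>mu)\<bar> \<ge> t}"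
  shows "S \<in> sets (PiM {..<n} (\<lambda>_. mu))"
    and "measure (PiM {..<n} (\<lambda>_. mu)) S \<le> 2 * exp (-2 * real (card ({..<n}-{i})) * t\<^sup>2)"
proof -
  interpret mu: prob_space mu by (rule M)
  interpret PS: product_sigma_finite "\<lambda>_. mu"
    by (simp add: product_sigma_finite_def mu.sigma_finite_measure_axioms)
  interpret PP: prob_space "PiM {..<n} (\<lambda>_. mu)" by (rule prob_space_PiM) (use M in auto)
  have [measurable]: "i \<in> {..<n}" using i by simp
  show Sm: "S \<in> sets (PiM {..<n} (\<lambda>_. mu))"
    unfolding S_def by measurable
  show "measure (PiM {..<n} (\<lambda>_. mu)) S \<le> 2 * exp (-2 * real (card ({..<n}-{i})) * t\<^sup>2)"
  proof -
    define I where "I = {..<n}-{i}"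
    have ins: "insert i I = {..<n}" and iI: "i \<notin> I" and finI: "finite I" using i by (auto simp: I_def)
    have "(if i = 0 then 1 else 0) \<in> I" using i n2 by (auto simp: I_def)
    then have Ine: "I \<noteq> {}" by auto
    define c where "c = 2 * exp (-2 * real (card I) * t\<^sup>2)"
    have "emeasure (PiM {..<n} (\<lambda>_. mu)) S = (\<integral>\<^sup>+ X. indicator S X \<partial>PiM (insert i I) (\<lambda>_. mu))"
      using Sm by (simp add: ins)
    also have "\<dots> = (\<integral>\<^sup>+ y. (\<integral>\<^sup>+ x. indicator S (x(i := y)) \<partial>PiM I (\<lambda>_. mu)) \<partial>mu)"
      by (rule PS.product_nn_integral_insert_rev[OF finI iI]) (use Sm in \<open>simp add: ins\<close>)
    also have "\<dots> \<le> (\<integral>\<^sup>+ y. ennreal c \<partial>mu)"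
    proof (rule nn_integral_mono)
      fix y assume y: "y \<in> space mu"
      define T where "T = {x \<in> space (PiM I (\<lambda>_. mu)). \<bar>(\<Sum>j\<in>I. g y (x j)) / card I - (\<integral>z. g y z \<partial>mu)\<bar> \<ge> t}"
      have Tm: "T \<in> sets (PiM I (\<lambda>_. mu))" unfolding T_def using y by measurable
      have "(\<integral>\<^sup>+ x. indicator S (x(i := y)) \<partial>PiM I (\<lambda>_. mu)) = (\<integral>\<^sup>+ x. indicator T x \<partial>PiM I (\<lambda>_. mu))"
      proof (rule nn_integral_cong)
        fix x assume x: "x \<in> space (PiM I (\<lambda>_. mu))"
        have sp: "x(i := y) \<in> space (PiM {..<n} (\<lambda>_. mu))"
          using x y i iI by (auto simp: space_PiM PiE_def extensional_def I_def Pi_iff)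
        have "(\<Sum>j\<in>I. g ((x(i := y)) i) ((x(i := y)) j)) = (\<Sum>j\<in>I. g y (x j))"
          using iI by (intro sum.cong) auto
        then show "indicator S (x(i := y)) = (indicator T x :: ennreal)"
          using sp x by (simp add: S_def T_def I_def[symmetric] indicator_def)
      qed
      also have "\<dots> = emeasure (PiM I (\<lambda>_. mu)) T" using Tm by simp
      also have "\<dots> = ennreal (measure (PiM I (\<lambda>_. mu)) T)"
      proof -
        interpret PI: prob_space "PiM I (\<lambda>_. mu)" by (rule prob_space_PiM) (use M in auto)
        show ?thesis by (rule PI.emeasure_eq_measure)
      qed
      also have "\<dots> \<le> ennreal c"
      proof (rule ennreal_leI)
        have gy: "g y \<in> borel_measurable mu" using y by measurable
        show "measure (PiM I (\<lambda>_. mu)) T \<le> c"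
          using hoeff_PiM[OF M finI Ine gy _ t] gr unfolding T_def c_def by simp
      qed
      finally show "(\<integral>\<^sup>+ x. indicator S (x(i := y)) \<partial>PiM I (\<lambda>_. mu)) \<le> ennreal c" .
    qed
    also have "\<dots> = ennreal c" using mu.emeasure_space_1 by simp
    finally have "ennreal (measure (PiM {..<n} (\<lambda>_. mu)) S) \<le> ennreal c"
      by (simp add: PP.emeasure_eq_measure)
    then show ?thesis unfolding c_def I_def by (simp add: ennreal_le_iff)
  qed
qed

lemma emp_integral:
  fixes g :: "'a \<Rightarrow> real"
  assumes "n > 0"
  shows "integral\<^sup>L (emp_measure n X) g = (\<Sum>j<n. g (X j)) / n"
  using assms by (simp add: emp_measure_def, subst integral_pmf_of_set) auto

lemma T_emp:
  assumes "n > 0"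
  shows "T_op (emp_measure n X) k Ms rho vs x =
    ((\<Sum>j<n. k x (X j) * (if X j \<in> Ms then 1 else vs (X j))) / n) / (rho + (\<Sum>j<n. k x (X j)) / n)"
proof -
  have sp: "space (emp_measure n X) = UNIV" by (simp add: emp_measure_def)
  have "(\<Sum>j<n. indicator Ms (X j) * k x (X j)) / real n + (\<Sum>j<n. indicator (- Ms) (X j) * (k x (X j) * vs (X j))) / real n
      = (\<Sum>j<n. k x (X j) * (if X j \<in> Ms then 1 else vs (X j))) / n"
    unfolding add_divide_distrib[symmetric] sum.distrib[symmetric]
    by (intro arg_cong[where f="\<lambda>z. z / real n"] sum.cong) (auto simp: indicator_def)
  then show ?thesis
    unfolding T_op_def set_lebesgue_integral_def sp using assms
    by (simp add: emp_integral Compl_eq_Diff_UNIV[symmetric])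
qed

lemma frac_bound:
  fixes a a' b b' rho e1 e2 :: real
  assumes "rho > 0" "0 \<le> b" "0 \<le> a'" "a' \<le> b'" "\<bar>a - a'\<bar> \<le> e1" "\<bar>b - b'\<bar> \<le> e2"
  shows "\<bar>a' / (rho + b') - a / (rho + b)\<bar> \<le> (e1 + e2) / rho"
proof -
  have p1: "rho + b > 0" "rho + b' > 0" using assms by auto
  have eq: "a' / (rho + b') - a / (rho + b) = ((a' - a) * (rho + b') + a' * (b - b')) / ((rho + b') * (rho + b))"
    using p1 by (simp add: diff_frac_eq algebra_simps)
  have n1: "\<bar>(a' - a) * (rho + b')\<bar> \<le> e1 * (rho + b')"
    using p1 assms by (simp add: abs_mult abs_minus_commute mult_right_mono)
  have n2: "\<bar>a' * (b - b')\<bar> \<le> (rho + b') * e2"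
    using p1 assms by (simp add: abs_mult mult_mono)
  have num: "\<bar>(a' - a) * (rho + b') + a' * (b - b')\<bar> \<le> (e1 + e2) * (rho + b')"
    using n1 n2 abs_triangle_ineq[of "(a' - a) * (rho + b')" "a' * (b - b')"] by (simp add: algebra_simps)
  have "\<bar>a' / (rho + b') - a / (rho + b)\<bar> = \<bar>(a' - a) * (rho + b') + a' * (b - b')\<bar> / ((rho + b') * (rho + b))"
    unfolding eq using p1 by simp
  also have "\<dots> \<le> (e1 + e2) * (rho + b') / ((rho + b') * (rho + b))"
    using num p1 by (intro divide_right_mono) auto
  also have "\<dots> = (e1 + e2) / (rho + b)" using p1 by simp
  also have "\<dots> \<le> (e1 + e2) / rho"
    using assms by (intro divide_left_mono) auto
  finally show ?thesis .
qed

lemma avg_bound: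
  fixes c A S t :: real and n :: nat
  assumes "n \<ge> 2" "0 \<le> c" "c \<le> 1" "0 \<le> A" "A \<le> 1" "\<bar>S / (real n - 1) - A\<bar> < t"
  shows "\<bar>(c + S) / n - A\<bar> < 1 / n + t"
proof -
  define d where "d = S / (real n - 1) - A"
  have n1: "real n - 1 > 0" "real n > 0" using assms by auto
  have S: "S = (real n - 1) * (A + d)" using n1 by (simp add: d_def field_simps)
  have eq: "(c + S) / n - A = (c - A) / n + ((real n - 1) / n) * d"
    using n1 by (simp add: S field_simps)
  have "\<bar>(c - A) / n\<bar> \<le> 1 / n" using assms n1 by (auto simp: abs_le_iff divide_right_mono)
  moreover have "\<bar>((real n - 1) / n) * d\<bar> < t"
  proof -
    have "\<bar>((real n - 1) / n) * d\<bar> = ((real n - 1) / n) * \<bar>d\<bar>" using n1 by (simp add: abs_mult)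
    also have "\<dots> \<le> \<bar>d\<bar>" using n1 by (intro mult_left_le_one_le) auto
    finally show ?thesis using assms d_def by simp
  qed
  ultimately show ?thesis unfolding eq by linarith
qed

lemma sample_norm_gt:
  fixes u :: "'a \<Rightarrow> real"
  assumes "\<epsilon> > 0"
  shows "(\<epsilon> < sample_norm n X Ms u) = (\<exists>i<n. X i \<notin> Ms \<and> \<epsilon> < \<bar>u (X i)\<bar>)"
proof -
  have F: "{\<bar>u (X i)\<bar> | i. i < n \<and> X i \<notin> Ms} = (\<lambda>i. \<bar>u (X i)\<bar>) ` {i. i < n \<and> X i \<notin> Ms}" by auto
  have fin: "finite {\<bar>u (X i)\<bar> | i. i < n \<and> X i \<notin> Ms}" unfolding F by auto
  show ?thesis unfolding sample_norm_def
    using assms by (subst Max_gr_iff) (use fin in auto)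
qed

theorem lemma4:
  fixes mu :: "'a::metric_space measure"
    and k :: "'a \<Rightarrow> 'a \<Rightarrow> real"
    and Ms :: "'a set"
    and rho :: real
    and vs :: "'a \<Rightarrow> real"
    and \<epsilon> :: real
    and n :: nat
  assumes compact_M: "compact (UNIV :: 'a set)"
    and sets_mu: "sets mu = sets borel"
    and prob: "prob_space mu"
    and k_meas: "(\<lambda>(x, y). k x y) \<in> borel_measurable (mu \<Otimes>\<^sub>M mu)"
    and k_range: "\<And>x y. 0 \<le> k x y \<and> k x y \<le> 1"
    and Ms_meas: "Ms \<in> sets mu"
    and rho_pos: "rho > 0"
    and vs_meas: "vs \<in> borel_measurable mu"
    and vs_range: "\<And>x. x \<notin> Ms \<Longrightarrow> 0 \<le> vs x \<and> vs x \<le> 1"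
    and vs_fix: "\<And>x. x \<notin> Ms \<Longrightarrow> T_op mu k Ms rho vs x = vs x"
    and vs_unique: "\<And>w. w \<in> borel_measurable mu \<Longrightarrow>
                       (\<forall>x. x \<notin> Ms \<longrightarrow> 0 \<le> w x \<and> w x \<le> 1) \<Longrightarrow>
                       (\<forall>x. x \<notin> Ms \<longrightarrow> T_op mu k Ms rho w x = w x) \<Longrightarrow>
                       (\<forall>x. x \<notin> Ms \<longrightarrow> w x = vs x)"
    and eps_pos: "\<epsilon> > 0"
    and n_large: "real n > 6 / (\<epsilon> * rho)"
  shows "{X \<in> space (PiM {..<n} (\<lambda>_. mu)).
            sample_norm n X Ms (\<lambda>x. vs x - T_op (emp_measure n X) k Ms rho vs x) > \<epsilon>}
           \<in> sets (PiM {..<n} (\<lambda>_. mu))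
       \<and> measure (PiM {..<n} (\<lambda>_. mu))
           {X \<in> space (PiM {..<n} (\<lambda>_. mu)).
            sample_norm n X Ms (\<lambda>x. vs x - T_op (emp_measure n X) k Ms rho vs x) > \<epsilon>}
         < 4 * real n * exp (- ((real n - 1) * rho^2 * \<epsilon>^2 / 36))"
proof -
  interpret mu: prob_space mu by (rule prob)
  have spmu: "space mu = UNIV" using sets_eq_imp_space_eq[OF sets_mu] by simp
  interpret PP: prob_space "PiM {..<n} (\<lambda>_. mu)" by (rule prob_space_PiM) (use prob in auto)
  define w where "w y = (if y \<in> Ms then 1 else vs y)" for y
  define f where "f x y = k x y * w y" for x y
  note k_meas[measurable] Ms_meas[measurable] vs_meas[measurable]
  have w_meas[measurable]: "w \<in> borel_measurable mu" unfolding w_def by measurable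
  have f_meas[measurable]: "(\<lambda>(x, y). f x y) \<in> borel_measurable (mu \<Otimes>\<^sub>M mu)"
  proof -
    have "(\<lambda>p. (\<lambda>(x, y). k x y) p * w (snd p)) \<in> borel_measurable (mu \<Otimes>\<^sub>M mu)" by measurable
    moreover have "(\<lambda>p. (\<lambda>(x, y). k x y) p * w (snd p)) = (\<lambda>(x, y). f x y)" by (auto simp: f_def)
    ultimately show ?thesis by simp
  qed
  have wr: "0 \<le> w y \<and> w y \<le> 1" for y using vs_range[of y] by (auto simp: w_def)
  have fk: "0 \<le> f x y \<and> f x y \<le> k x y" for x y
    using wr[of y] k_range[of x y] by (auto simp: f_def mult_left_le)
  have fr: "0 \<le> f x y \<and> f x y \<le> 1" for x y using fk[of x y] k_range[of x y] by auto
  have xsp: "x \<in> space mu" for x by (simp add: spmu)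
  have kx[measurable]: "(\<lambda>y. k x y) \<in> borel_measurable mu" for x using xsp[of x] by measurable
  have fx[measurable]: "(\<lambda>y. f x y) \<in> borel_measurable mu" for x using xsp[of x] by measurable
  have int_k: "integrable mu (\<lambda>y. k x y)" for x
    by (rule mu.integrable_const_bound[where B=1]) (use k_range in auto)
  have int_f: "integrable mu (\<lambda>y. f x y)" for x
    by (rule mu.integrable_const_bound[where B=1]) (use fr in auto)
  define A where "A x = (\<integral>y. f x y \<partial>mu)" for x
  define B where "B x = (\<integral>y. k x y \<partial>mu)" for x
  have A0: "0 \<le> A x" for x unfolding A_def using fr by (intro integral_nonneg_AE) auto
  have AB: "A x \<le> B x" for x unfolding A_def B_def using fk int_f int_k by (intro integral_mono) auto
  have B1: "B x \<le> 1" for x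
  proof -
    have "B x \<le> (\<integral>y. 1 \<partial>mu)" unfolding B_def using k_range int_k by (intro integral_mono) auto
    then show ?thesis by (simp add: mu.prob_space)
  qed
  have vsA: "vs x = A x / (rho + B x)" if x: "x \<notin> Ms" for x
  proof -
    have i1: "integrable mu (\<lambda>y. indicator Ms y *\<^sub>R k x y)"
      by (rule mu.integrable_const_bound[where B=1]) (use k_range in \<open>auto simp: indicator_def\<close>)
    have kv: "k x y * vs y \<le> 1" if "y \<notin> Ms" for y
      using k_range[of x y] vs_range[OF that] by (intro mult_le_one) auto
    have i2: "integrable mu (\<lambda>y. indicator (space mu - Ms) y *\<^sub>R (k x y * vs y))"
      by (rule mu.integrable_const_bound[where B=1])
         (use kv k_range vs_range in \<open>auto simp: indicator_def abs_mult\<close>)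
    have "(LINT y:Ms|mu. k x y) + (LINT y:(space mu - Ms)|mu. k x y * vs y) = A x"
      unfolding set_lebesgue_integral_def A_def
      by (subst Bochner_Integration.integral_add[OF i1 i2, symmetric])
         (auto intro!: Bochner_Integration.integral_cong simp: indicator_def f_def w_def spmu)
    then show ?thesis using vs_fix[OF x] unfolding T_op_def B_def by simp
  qed
  have npos: "n > 0"
  proof -
    have "6 / (\<epsilon> * rho) > 0" using eps_pos rho_pos by auto
    then show ?thesis using n_large by (cases n) auto
  qed
  define Ei where "Ei i = {X \<in> space (PiM {..<n} (\<lambda>_. mu)). X i \<notin> Ms \<and>
      \<epsilon> < \<bar>vs (X i) - ((\<Sum>j<n. f (X i) (X j)) / n) / (rho + (\<Sum>j<n. k (X i) (X j)) / n)\<bar>}" for i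
  define E where "E = {X \<in> space (PiM {..<n} (\<lambda>_. mu)).
            sample_norm n X Ms (\<lambda>x. vs x - T_op (emp_measure n X) k Ms rho vs x) > \<epsilon>}"
  have E_eq: "E = (\<Union>i<n. Ei i)"
  proof -
    have Teq: "T_op (emp_measure n X) k Ms rho vs x = ((\<Sum>j<n. f x (X j)) / n) / (rho + (\<Sum>j<n. k x (X j)) / n)" for X x
      unfolding T_emp[OF npos] f_def w_def ..
    show ?thesis unfolding E_def Ei_def sample_norm_gt[OF eps_pos] Teq by blast
  qed
  have Ei_meas: "Ei i \<in> sets (PiM {..<n} (\<lambda>_. mu))" if "i < n" for i
  proof -
    have [measurable]: "i \<in> {..<n}" using that by simp
    show ?thesis unfolding Ei_def by measurable
  qed
  have E_meas: "E \<in> sets (PiM {..<n} (\<lambda>_. mu))"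
    unfolding E_eq using Ei_meas by auto
  have bound: "measure (PiM {..<n} (\<lambda>_. mu)) E < 4 * real n * exp (- ((real n - 1) * rho^2 * \<epsilon>^2 / 36))"
  proof (cases "n = 1")
    case True
    have "measure (PiM {..<n} (\<lambda>_. mu)) E \<le> 1" by (rule PP.prob_le_1)
    also have "1 < 4 * real n * exp (- ((real n - 1) * rho^2 * \<epsilon>^2 / 36))" using True by simp
    finally show ?thesis .
  next
    case False
    then have n2: "n \<ge> 2" using npos by auto
    define t where "t = \<epsilon> * rho / 3"
    have t0: "t \<ge> 0" using eps_pos rho_pos by (simp add: t_def)
    define c where "c = 2 * exp (-2 * (real n - 1) * t\<^sup>2)"
    have cardI: "real (card ({..<n}-{i})) = real n - 1" if "i < n" for i
      using that npos by (simp add: of_nat_diff)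
    define SA where "SA i = {X \<in> space (PiM {..<n} (\<lambda>_. mu)).
      \<bar>(\<Sum>j\<in>{..<n}-{i}. f (X i) (X j)) / real (card ({..<n}-{i})) - (\<integral>y. f (X i) y \<partial>mu)\<bar> \<ge> t}" for i
    define SB where "SB i = {X \<in> space (PiM {..<n} (\<lambda>_. mu)).
      \<bar>(\<Sum>j\<in>{..<n}-{i}. k (X i) (X j)) / real (card ({..<n}-{i})) - (\<integral>y. k (X i) y \<partial>mu)\<bar> \<ge> t}" for i
    have SA: "SA i \<in> sets (PiM {..<n} (\<lambda>_. mu)) \<and> measure (PiM {..<n} (\<lambda>_. mu)) (SA i) \<le> c" if "i < n" for i
      using cond_bound[OF prob f_meas fr that n2 t0] unfolding SA_def c_def cardI[OF that] by simp
    have SB: "SB i \<in> sets (PiM {..<n} (\<lambda>_. mu)) \<and> measure (PiM {..<n} (\<lambda>_. mu)) (SB i) \<le> c" if "i < n" for i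
      using cond_bound[OF prob k_meas k_range that n2 t0] unfolding SB_def c_def cardI[OF that] by simp
    have ninv: "1 / real n < \<epsilon> * rho / 6"
    proof -
      have "6 / (\<epsilon> * rho) < real n" by (rule n_large)
      then have "6 < real n * (\<epsilon> * rho)" using eps_pos rho_pos by (simp add: divide_less_eq)
      then show ?thesis using npos by (simp add: divide_less_eq mult.commute mult.left_commute)
    qed
    have sub: "Ei i \<subseteq> SA i \<union> SB i" if i: "i < n" for i
    proof
      fix X assume XE: "X \<in> Ei i"
      show "X \<in> SA i \<union> SB i"
      proof (rule ccontr)
        assume nS: "X \<notin> SA i \<union> SB i"
        define x where "x = X i"
        define SumA where "SumA = (\<Sum>j\<in>{..<n}-{i}. f x (X j))"
        define SumB where "SumB = (\<Sum>j\<in>{..<n}-{i}. k x (X j))"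
        have Xsp: "X \<in> space (PiM {..<n} (\<lambda>_. mu))" and xMs: "x \<notin> Ms"
          and big: "\<epsilon> < \<bar>vs x - ((\<Sum>j<n. f x (X j)) / n) / (rho + (\<Sum>j<n. k x (X j)) / n)\<bar>"
          using XE by (auto simp: Ei_def x_def)
        have hA: "\<bar>SumA / (real n - 1) - A x\<bar> < t"
          using nS Xsp unfolding SA_def SumA_def A_def x_def cardI[OF i] by auto
        have hB: "\<bar>SumB / (real n - 1) - B x\<bar> < t"
          using nS Xsp unfolding SB_def SumB_def B_def x_def cardI[OF i] by auto
        have splitA: "(\<Sum>j<n. f x (X j)) = f x x + SumA"
          unfolding SumA_def x_def using i by (subst sum.remove[of "{..<n}" i]) auto
        have splitB: "(\<Sum>j<n. k x (X j)) = k x x + SumB"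
          unfolding SumB_def x_def using i by (subst sum.remove[of "{..<n}" i]) auto
        have aA: "\<bar>(f x x + SumA) / n - A x\<bar> < 1 / n + t"
          by (rule avg_bound[OF n2 _ _ A0 _ hA]) (use fr[of x x] AB[of x] B1[of x] in auto)
        have bB: "\<bar>(k x x + SumB) / n - B x\<bar> < 1 / n + t"
          by (rule avg_bound[OF n2 _ _ _ B1 hB]) (use k_range[of x x] A0[of x] AB[of x] in auto)
        have e: "1 / real n + t \<le> \<epsilon> * rho / 2" using ninv by (simp add: t_def)
        have b0: "0 \<le> (k x x + SumB) / n" unfolding SumB_def using k_range by (intro divide_nonneg_nonneg add_nonneg_nonneg sum_nonneg) auto
        have "\<bar>A x / (rho + B x) - ((f x x + SumA) / n) / (rho + (k x x + SumB) / n)\<bar> \<le> (\<epsilon> * rho / 2 + \<epsilon> * rho / 2) / rho"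
          by (rule frac_bound[OF rho_pos b0 A0 AB]) (use aA bB e in auto)
        also have "\<dots> = \<epsilon>" using rho_pos by simp
        finally show False using big vsA[OF xMs] splitA splitB by simp
      qed
    qed
    have "measure (PiM {..<n} (\<lambda>_. mu)) E \<le> measure (PiM {..<n} (\<lambda>_. mu)) (\<Union>i<n. SA i \<union> SB i)"
    proof -
      have U: "(\<Union>i<n. SA i \<union> SB i) \<in> sets (PiM {..<n} (\<lambda>_. mu))"
        using SA SB by (intro sets.finite_UN sets.Un) auto
      show ?thesis unfolding E_eq using sub U by (intro PP.finite_measure_mono) auto
    qed
    also have "\<dots> \<le> (\<Sum>i<n. measure (PiM {..<n} (\<lambda>_. mu)) (SA i \<union> SB i))"
      using SA SB by (intro PP.finite_measure_subadditive_finite) auto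
    also have "\<dots> \<le> (\<Sum>i<n. c + c)"
    proof (rule sum_mono)
      fix i assume "i \<in> {..<n}"
      then have i: "i < n" by simp
      have "measure (PiM {..<n} (\<lambda>_. mu)) (SA i \<union> SB i) \<le> measure (PiM {..<n} (\<lambda>_. mu)) (SA i) + measure (PiM {..<n} (\<lambda>_. mu)) (SB i)"
        using SA[OF i] SB[OF i] by (intro measure_subadditive) (auto simp: PP.emeasure_eq_measure)
      then show "measure (PiM {..<n} (\<lambda>_. mu)) (SA i \<union> SB i) \<le> c + c" using SA[OF i] SB[OF i] by linarith
    qed
    also have "\<dots> = 4 * real n * exp (-2 * (real n - 1) * t\<^sup>2)" by (simp add: c_def)
    also have "\<dots> < 4 * real n * exp (- ((real n - 1) * rho^2 * \<epsilon>^2 / 36))"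
    proof -
      have pos: "(real n - 1) * rho^2 * \<epsilon>^2 > 0" using n2 rho_pos eps_pos by auto
      have "-2 * (real n - 1) * t\<^sup>2 = - ((real n - 1) * rho^2 * \<epsilon>^2) * (2/9)"
        by (simp add: t_def power2_eq_square field_simps)
      also have "\<dots> < - ((real n - 1) * rho^2 * \<epsilon>^2 / 36)" using pos by (simp add: mult_ac)
      finally show ?thesis using npos by simp
    qed
    finally show ?thesis .
  qed
  show ?thesis using E_meas bound unfolding E_def by simp
qed

end
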